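(* Let $G$ be a connected graph with $n\ge2$ vertices and $m$ edges, and assume $\gamma_n=0$ (i.e. $\frac{2m}{n}$ is a $Q$-eigenvalue of $G$). Then $$QE(G)\ \ge\ \frac{2m+M_1-\frac{4m^2}{n}}{\gamma_1},$$ with equality if and only if $G\cong K_{\frac n2,\frac n2}$.
   Context: All graphs are finite, simple and undirected. For a graph $G$ with $n$ vertices and $m$ edges, let $q_1\ge\cdots\ge q_n\ge0$ be the eigenvalues of the signless Laplacian $Q(G)=D(G)+A(G)$ ($D(G)$ the diagonal degree matrix, $A(G)$ the adjacency matrix). The signless Laplacian energy is $QE(G)=\sum_{i=1}^n|q_i-\frac{2m}{n}|$. $M_1=\sum_{v}d(v)^2$ is the first Zagreb index. Let $\gamma_1\ge\gamma_2\ge\cdots\ge\gamma_n\ge0$ denote the numbers $|q_i-\frac{2m}{n}|$, $i=1,\dots,n$, arranged in nonincreasing order. *)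

theory Defs
  imports "Jordan_Normal_Form.Char_Poly" "HOL-Computational_Algebra.Polynomial"
begin

definition simple_graph :: "nat \<Rightarrow> (nat \<Rightarrow> nat \<Rightarrow> bool) \<Rightarrow> bool" where
  "simple_graph n E \<longleftrightarrow> (\<forall>i j. E i j \<longrightarrow> i < n \<and> j < n) \<and>
     (\<forall>i j. E i j \<longrightarrow> E j i) \<and> (\<forall>i. \<not> E i i)"

definition connected_graph :: "nat \<Rightarrow> (nat \<Rightarrow> nat \<Rightarrow> bool) \<Rightarrow> bool" where
  "connected_graph n E \<longleftrightarrow> (\<forall>i<n. \<forall>j<n. E\<^sup>*\<^sup>* i j)"

definition degree :: "nat \<Rightarrow> (nat \<Rightarrow> nat \<Rightarrow> bool) \<Rightarrow> nat \<Rightarrow> nat" where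
  "degree n E i = card {j. j < n \<and> E i j}"

definition num_edges :: "nat \<Rightarrow> (nat \<Rightarrow> nat \<Rightarrow> bool) \<Rightarrow> nat" where
  "num_edges n E = card {{i, j} | i j. i < n \<and> j < n \<and> E i j}"

definition first_zagreb :: "nat \<Rightarrow> (nat \<Rightarrow> nat \<Rightarrow> bool) \<Rightarrow> nat" where
  "first_zagreb n E = (\<Sum>i<n. (degree n E i)^2)"

definition signless_laplacian :: "nat \<Rightarrow> (nat \<Rightarrow> nat \<Rightarrow> bool) \<Rightarrow> real mat" where
  "signless_laplacian n E = mat n n (\<lambda>(i, j).
      (if i = j then real (degree n E i) else 0) + (if E i j then 1 else 0))"

definition Q_eigenvalues :: "nat \<Rightarrow> (nat \<Rightarrow> nat \<Rightarrow> bool) \<Rightarrow> real multiset" where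
  "Q_eigenvalues n E = proots (char_poly (signless_laplacian n E))"

definition avg_deg :: "nat \<Rightarrow> (nat \<Rightarrow> nat \<Rightarrow> bool) \<Rightarrow> real" where
  "avg_deg n E = 2 * real (num_edges n E) / real n"

definition QE :: "nat \<Rightarrow> (nat \<Rightarrow> nat \<Rightarrow> bool) \<Rightarrow> real" where
  "QE n E = (\<Sum>q\<in>#Q_eigenvalues n E. \<bar>q - avg_deg n E\<bar>)"

text \<open>gamma_1 = largest, gamma_n = smallest of the numbers |q_i - 2m/n|.\<close>
definition gamma_max :: "nat \<Rightarrow> (nat \<Rightarrow> nat \<Rightarrow> bool) \<Rightarrow> real" where
  "gamma_max n E = Max ((\<lambda>q. \<bar>q - avg_deg n E\<bar>) ` set_mset (Q_eigenvalues n E))"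

definition gamma_min :: "nat \<Rightarrow> (nat \<Rightarrow> nat \<Rightarrow> bool) \<Rightarrow> real" where
  "gamma_min n E = Min ((\<lambda>q. \<bar>q - avg_deg n E\<bar>) ` set_mset (Q_eigenvalues n E))"

definition graph_iso :: "'a set \<Rightarrow> ('a \<Rightarrow> 'a \<Rightarrow> bool) \<Rightarrow> 'b set \<Rightarrow> ('b \<Rightarrow> 'b \<Rightarrow> bool) \<Rightarrow> bool" where
  "graph_iso V1 E1 V2 E2 \<longleftrightarrow> (\<exists>f. bij_betw f V1 V2 \<and>
      (\<forall>u\<in>V1. \<forall>v\<in>V1. E1 u v \<longleftrightarrow> E2 (f u) (f v)))"

definition complete_bipartite_edge :: "nat \<Rightarrow> nat \<Rightarrow> nat \<Rightarrow> nat \<Rightarrow> bool" where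
  "complete_bipartite_edge p q u v \<longleftrightarrow> u < p + q \<and> v < p + q \<and> ((u < p) \<noteq> (v < p))"

end

theory Submission
  imports Defs "Jordan_Normal_Form.Schur_Decomposition"
begin


lemma sgD: assumes "simple_graph n E" "E i j" shows "i < n" "j < n" "E j i" "i \<noteq> j"
  using assms unfolding simple_graph_def by metis+

lemma handshake: assumes sg: "simple_graph n E"
  shows "(\<Sum>i<n. degree n E i) = 2 * num_edges n E"
proof -
  define P where "P = {(i,j). i<n \<and> j<n \<and> E i j}"
  define P1 where "P1 = {(i,j). i<n \<and> j<n \<and> E i j \<and> i < j}"
  define P2 where "P2 = {(i,j). i<n \<and> j<n \<and> E i j \<and> j < i}"
  have fin: "finite P1" "finite P2"
    by (rule finite_subset[of _ "{..<n} \<times> {..<n}"], auto simp: P1_def P2_def)+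
  have "P = Sigma {..<n} (\<lambda>i. {j. j<n \<and> E i j})" unfolding P_def by auto
  hence "card P = (\<Sum>i<n. degree n E i)" unfolding degree_def
    by (simp add: card_SigmaI)
  moreover have "P = P1 \<union> P2" using sgD[OF sg] unfolding P_def P1_def P2_def
    by (auto, metis linorder_neqE_nat)
  moreover have "P1 \<inter> P2 = {}" unfolding P1_def P2_def by auto
  moreover have "card P2 = card P1"
  proof -
    have "P2 = prod.swap ` P1" unfolding P1_def P2_def using sgD[OF sg] by (auto simp: image_iff) 
    thus ?thesis by (simp add: card_image)
  qed
  moreover have "card P1 = num_edges n E"
  proof -
    have "{{i, j} | i j. i < n \<and> j < n \<and> E i j} = (\<lambda>(i,j). {i,j}) ` P1"
      unfolding P1_def using sgD[OF sg] 
      apply (auto simp: image_iff)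
      by (metis insert_commute linorder_neqE_nat)
    moreover have "inj_on (\<lambda>(i,j). {i,j}) P1" unfolding P1_def inj_on_def
      by (auto simp: doubleton_eq_iff)
    ultimately show ?thesis unfolding num_edges_def by (simp add: card_image)
  qed
  ultimately show ?thesis using fin by (simp add: card_Un_disjoint)
qed


lemma sym_real_roots:
  fixes X :: "real mat"
  assumes X: "X \<in> carrier_mat n n" and sym: "\<And>i j. i<n \<Longrightarrow> j<n \<Longrightarrow> X$$(i,j) = X$$(j,i)"
  shows "\<exists>es. length es = n \<and> char_poly X = (\<Prod>e\<leftarrow>es. [:-e,1:])"
proof -
  interpret ph: map_poly_inj_comm_ring_hom "complex_of_real" by unfold_locales
  let ?Xc = "map_mat complex_of_real X"
  have Xc: "?Xc \<in> carrier_mat n n" using X by auto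
  obtain cs where cs: "char_poly ?Xc = (\<Prod>a\<leftarrow>cs. [:-a,1:])" "length cs = n"
    using char_poly_factorized[OF Xc] by auto
  have hom: "char_poly ?Xc = map_poly complex_of_real (char_poly X)"
    by (rule of_real_hom.char_poly_hom[OF X])
  have real: "Im c = 0" if c: "c \<in> set cs" for c
  proof -
    have "poly (char_poly ?Xc) c = 0" unfolding cs(1) using c by (rule linear_poly_root)
    then have "eigenvalue ?Xc c" using eigenvalue_root_char_poly[OF Xc] by simp
    then obtain v where v: "v \<in> carrier_vec n" "v \<noteq> 0\<^sub>v n" "?Xc *\<^sub>v v = c \<cdot>\<^sub>v v"
      unfolding eigenvalue_def eigenvector_def using Xc by auto
    have row: "(\<Sum>j<n. of_real (X$$(i,j)) * v$j) = c * v$i" if i: "i < n" for i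
    proof -
      have "(?Xc *\<^sub>v v) $ i = c * v$i" using v(3) i v(1) by simp
      moreover have "(?Xc *\<^sub>v v) $ i = (\<Sum>j<n. of_real (X$$(i,j)) * v$j)"
        using i X v(1) by (auto simp: scalar_prod_def lessThan_atLeast0 intro!: sum.cong)
      ultimately show ?thesis by simp
    qed
    define S where "S = (\<Sum>i<n. \<Sum>j<n. cnj (v$i) * of_real (X$$(i,j)) * v$j)"
    define N where "N = (\<Sum>i<n. (cmod (v$i))^2)"
    have "S = (\<Sum>i<n. cnj (v$i) * (\<Sum>j<n. of_real (X$$(i,j)) * v$j))"
      unfolding S_def by (simp add: sum_distrib_left mult.assoc)
    also have "\<dots> = (\<Sum>i<n. c * (cnj (v$i) * v$i))" by (rule sum.cong, auto simp: row)
    also have "\<dots> = c * of_real N" unfolding N_def of_real_sum sum_distrib_left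
      by (rule sum.cong[OF refl], metis complex_norm_square of_real_power mult.commute)
    finally have S: "S = c * of_real N" .
    have "cnj S = (\<Sum>i<n. \<Sum>j<n. cnj (v$j) * of_real (X$$(j,i)) * v$i)"
      unfolding S_def by (auto intro!: sum.cong simp: sym mult.commute mult.left_commute)
    also have "\<dots> = S" unfolding S_def by (rule sum.swap)
    finally have "Im S = 0" by (metis cnj.simps(2) complex_cnj_cancel_iff neg_equal_zero)
    moreover have "N > 0"
    proof -
      obtain i where i: "i < n" "v $ i \<noteq> 0" using v(1,2) by (metis eq_vecI carrier_vecD index_zero_vec)
      have "(cmod (v$i))^2 \<le> N" unfolding N_def
        by (rule member_le_sum[of i "{..<n}" "\<lambda>i. (cmod (v$i))^2", simplified], insert i, auto)
      moreover have "(cmod (v$i))^2 > 0" using i by simp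
      ultimately show ?thesis by linarith
    qed
    ultimately show "Im c = 0" using S by simp
  qed
  define es where "es = map Re cs"
  have "map_poly complex_of_real (\<Prod>e\<leftarrow>es. [:-e,1:]) = (\<Prod>a\<leftarrow>cs. [:-a,1:])"
    using real unfolding es_def
  proof (induct cs)
    case (Cons a cs)
    have IH: "map_poly complex_of_real (\<Prod>e\<leftarrow>map Re cs. [:-e,1:]) = (\<Prod>a\<leftarrow>cs. [:-a,1:])"
      using Cons by auto
    have "map_poly complex_of_real [:-Re a,1:] = [:-a,1:]" using Cons(2)[of a]
      by (simp add: complex_eq_iff)
    thus ?case by (simp only: list.map prod_list.Cons ph.hom_mult IH)
  qed simp
  with hom cs have "map_poly complex_of_real (char_poly X) = map_poly complex_of_real (\<Prod>e\<leftarrow>es. [:-e,1:])"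
    by simp
  hence "char_poly X = (\<Prod>e\<leftarrow>es. [:-e,1:])" by (rule ph.injectivity)
  moreover have "length es = n" using cs(2) es_def by simp
  ultimately show ?thesis by blast
qed


definition mtr :: "real mat \<Rightarrow> real" where "mtr A = (\<Sum>i<dim_row A. A$$(i,i))"

lemma mtr_comm: assumes A: "A \<in> carrier_mat n n" and B: "B \<in> carrier_mat n n"
  shows "mtr (A*B) = mtr (B*A)"
proof -
  have "mtr (A*B) = (\<Sum>i<n. \<Sum>k<n. A$$(i,k) * B$$(k,i))"
    unfolding mtr_def using A B by (auto simp: scalar_prod_def lessThan_atLeast0 intro!: sum.cong)
  also have "\<dots> = (\<Sum>k<n. \<Sum>i<n. B$$(k,i) * A$$(i,k))" by (subst sum.swap) (simp add: mult.commute)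
  also have "\<dots> = mtr (B*A)"
    unfolding mtr_def using A B by (auto simp: scalar_prod_def lessThan_atLeast0 intro!: sum.cong)
  finally show ?thesis .
qed

lemma ut_mult: assumes T: "T \<in> carrier_mat n n" and S: "S \<in> carrier_mat n n"
  and uT: "upper_triangular T" and uS: "upper_triangular S"
  shows "upper_triangular (T*S)" "\<And>i. i < n \<Longrightarrow> (T*S)$$(i,i) = T$$(i,i) * S$$(i,i)"
proof -
  show "upper_triangular (T*S)"
  proof (rule upper_triangularI)
    fix i j assume ji: "j < i" and i: "i < dim_row (T*S)"
    have "(T*S)$$(i,j) = (\<Sum>k<n. T$$(i,k) * S$$(k,j))"
      using T S i ji by (auto simp: scalar_prod_def lessThan_atLeast0 intro!: sum.cong)
    also have "\<dots> = 0"
    proof (rule sum.neutral, rule ballI)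
      fix k assume k: "k \<in> {..<n}"
      show "T$$(i,k) * S$$(k,j) = 0"
      proof (cases "k < i")
        case True then show ?thesis using upper_triangularD[OF uT True] T i by auto
      next
        case False then have "j < k" using ji by auto
        then show ?thesis using upper_triangularD[OF uS \<open>j < k\<close>] S k by auto
      qed
    qed
    finally show "(T*S)$$(i,j) = 0" .
  qed
  fix i assume i: "i < n"
  have "(T*S)$$(i,i) = (\<Sum>k<n. T$$(i,k) * S$$(k,i))"
    using T S i by (auto simp: scalar_prod_def lessThan_atLeast0 intro!: sum.cong)
  also have "\<dots> = T$$(i,i) * S$$(i,i) + (\<Sum>k\<in>{..<n}-{i}. T$$(i,k) * S$$(k,i))"
    using i by (subst sum.remove[of _ i], auto)
  also have "(\<Sum>k\<in>{..<n}-{i}. T$$(i,k) * S$$(k,i)) = 0"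
  proof (rule sum.neutral, rule ballI)
    fix k assume k: "k \<in> {..<n}-{i}"
    show "T $$ (i, k) * S $$ (k, i) = 0"
    proof (cases "k < i")
      case True then show ?thesis using upper_triangularD[OF uT True] T i by auto
    next
      case False then have "i < k" using k by auto
      then show ?thesis using upper_triangularD[OF uS \<open>i < k\<close>] S k by auto
    qed
  qed
  finally show "(T*S)$$(i,i) = T$$(i,i) * S$$(i,i)" by simp
qed

definition good :: "nat \<Rightarrow> real mat \<Rightarrow> real mat \<Rightarrow> real list \<Rightarrow> real mat \<Rightarrow> (real \<Rightarrow> real) \<Rightarrow> bool" where
  "good n P P' es A f \<longleftrightarrow> (\<exists>T \<in> carrier_mat n n. upper_triangular T \<and> A = P * T * P' \<and>
      (\<forall>i<n. T$$(i,i) = f (es!i)))"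

context
  fixes n :: nat and P P' :: "real mat" and es :: "real list"
  assumes P: "P \<in> carrier_mat n n" and P': "P' \<in> carrier_mat n n"
    and PP': "P * P' = 1\<^sub>m n" and P'P: "P' * P = 1\<^sub>m n" and les: "length es = n"
begin

lemma good_carrier: "good n P P' es A f \<Longrightarrow> A \<in> carrier_mat n n"
  unfolding good_def using P P' by auto

lemma good_one: "good n P P' es (1\<^sub>m n) (\<lambda>_. 1)"
  unfolding good_def
  by (rule bexI[of _ "1\<^sub>m n"], insert P P' PP', auto)

lemma good_add: assumes "good n P P' es A f" "good n P P' es B g" shows "good n P P' es (A + B) (\<lambda>x. f x + g x)"
proof -
  from assms obtain T S where T: "T \<in> carrier_mat n n" "upper_triangular T" "A = P * T * P'" "\<forall>i<n. T$$(i,i) = f (es!i)"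
    and S: "S \<in> carrier_mat n n" "upper_triangular S" "B = P * S * P'" "\<forall>i<n. S$$(i,i) = g (es!i)"
    unfolding good_def by blast
  have "A + B = (P * T + P * S) * P'" unfolding T(3) S(3) using P P' T(1) S(1)
    by (subst add_mult_distrib_mat[of _ n n], auto)
  also have "\<dots> = P * (T + S) * P'" using P P' T(1) S(1)
    by (subst mult_add_distrib_mat[of _ n n], auto)
  finally have "A + B = P * (T + S) * P'" .
  moreover have "upper_triangular (T + S)" using T(1,2) S(1,2) unfolding upper_triangular_def by auto
  ultimately show ?thesis unfolding good_def using T S by (intro bexI[of _ "T+S"], auto)
qed

lemma good_smult: assumes "good n P P' es A f" shows "good n P P' es (c \<cdot>\<^sub>m A) (\<lambda>x. c * f x)"
proof -
  from assms obtain T where T: "T \<in> carrier_mat n n" "upper_triangular T" "A = P * T * P'" "\<forall>i<n. T$$(i,i) = f (es!i)"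
    unfolding good_def by blast
  have "c \<cdot>\<^sub>m A = P * (c \<cdot>\<^sub>m T) * P'" unfolding T(3) using P P' T(1)
    by (metis mult_smult_distrib mult_smult_assoc_mat mult_carrier_mat smult_carrier_mat)
  moreover have "upper_triangular (c \<cdot>\<^sub>m T)" using T(1,2) unfolding upper_triangular_def by auto
  ultimately show ?thesis unfolding good_def using T by (intro bexI[of _ "c \<cdot>\<^sub>m T"], auto)
qed

lemma good_mult: assumes "good n P P' es A f" "good n P P' es B g" shows "good n P P' es (A * B) (\<lambda>x. f x * g x)"
proof -
  from assms obtain T S where T: "T \<in> carrier_mat n n" "upper_triangular T" "A = P * T * P'" "\<forall>i<n. T$$(i,i) = f (es!i)"
    and S: "S \<in> carrier_mat n n" "upper_triangular S" "B = P * S * P'" "\<forall>i<n. S$$(i,i) = g (es!i)"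
    unfolding good_def by blast
  have "A * B = P * T * (P' * P) * S * P'" unfolding T(3) S(3) using P P' T(1) S(1)
    by (simp add: assoc_mult_mat[of _ n n _ n _ n])
  also have "\<dots> = P * (T * S) * P'" unfolding P'P using P P' T(1) S(1)
    by (simp add: assoc_mult_mat[of _ n n _ n _ n])
  finally have "A * B = P * (T * S) * P'" .
  thus ?thesis unfolding good_def using T S ut_mult[OF T(1) S(1) T(2) S(2)]
    by (intro bexI[of _ "T*S"], auto)
qed

lemma good_mtr: assumes "good n P P' es A f" shows "mtr A = (\<Sum>i<n. f (es!i))"
proof -
  from assms obtain T where T: "T \<in> carrier_mat n n" "upper_triangular T" "A = P * T * P'" "\<forall>i<n. T$$(i,i) = f (es!i)"
    unfolding good_def by blast
  have "mtr A = mtr (P * (T * P'))" unfolding T(3) using P P' T(1) by (simp add: assoc_mult_mat[of _ n n _ n _ n])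
  also have "\<dots> = mtr ((T * P') * P)" by (rule mtr_comm[of _ n], insert P P' T(1), auto)
  also have "\<dots> = mtr T" using P P' T(1) by (simp add: assoc_mult_mat[of _ n n _ n _ n] P'P)
  also have "\<dots> = (\<Sum>i<n. f (es!i))" unfolding mtr_def using T by auto
  finally show ?thesis .
qed

end


lemma Q_carrier: "signless_laplacian n E \<in> carrier_mat n n" unfolding signless_laplacian_def by simp

lemma Q_idx: "i<n \<Longrightarrow> j<n \<Longrightarrow> signless_laplacian n E $$ (i,j) =
  (if i=j then real(degree n E i) else 0) + (if E i j then 1 else 0)"
  unfolding signless_laplacian_def by simp

lemma degree_sum: "real (degree n E i) = (\<Sum>j<n. if E i j then 1 else 0)"
proof -
  have "(\<Sum>j<n. if E i j then 1 else (0::real)) = real (card ({..<n} \<inter> {j. E i j}))"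
    by (simp add: sum.If_cases)
  also have "{..<n} \<inter> {j. E i j} = {j. j < n \<and> E i j}" by auto
  finally show ?thesis unfolding degree_def by simp
qed

context fixes n E assumes sg: "simple_graph n E"
begin

lemma irr: "\<not> E i i" using sg unfolding simple_graph_def by auto

lemma Q_sym: "i<n \<Longrightarrow> j<n \<Longrightarrow> signless_laplacian n E $$ (i,j) = signless_laplacian n E $$ (j,i)"
  using sgD[OF sg] by (auto simp: Q_idx)

lemma deg_sum_real: "(\<Sum>i<n. real (degree n E i)) = 2 * real (num_edges n E)"
  using handshake[OF sg] by (metis of_nat_mult of_nat_numeral of_nat_sum)

lemma mtr_Q: "mtr (signless_laplacian n E) = 2 * real (num_edges n E)"
proof -
  have "dim_row (signless_laplacian n E) = n" using Q_carrier[of n E] by auto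
  hence "mtr (signless_laplacian n E) = (\<Sum>i<n. real (degree n E i))"
    unfolding mtr_def using irr by (auto simp: Q_idx intro!: sum.cong)
  thus ?thesis using deg_sum_real by simp
qed

lemma mtr_QQ: "mtr (signless_laplacian n E * signless_laplacian n E) =
   real (first_zagreb n E) + 2 * real (num_edges n E)"
proof -
  let ?Q = "signless_laplacian n E"
  have "mtr (?Q * ?Q) = (\<Sum>i<n. \<Sum>j<n. ?Q$$(i,j) * ?Q$$(j,i))"
    unfolding mtr_def using Q_carrier[of n E] by (auto simp: scalar_prod_def lessThan_atLeast0 intro!: sum.cong)
  also have "\<dots> = (\<Sum>i<n. (real (degree n E i))^2 + real (degree n E i))"
  proof (rule sum.cong[OF refl])
    fix i assume i: "i \<in> {..<n}"
    have "(\<Sum>j<n. ?Q$$(i,j) * ?Q$$(j,i)) = (\<Sum>j<n. (if i = j then (real (degree n E i))^2 else 0) + (if E i j then 1 else 0))"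
    proof (rule sum.cong[OF refl])
      fix j assume j: "j \<in> {..<n}"
      show "?Q$$(i,j) * ?Q$$(j,i) = (if i = j then (real (degree n E i))^2 else 0) + (if E i j then 1 else 0)"
      proof (cases "i = j")
        case True thus ?thesis using i irr[of i] by (simp add: Q_idx power2_eq_square)
      next
        case False
        have "E i j \<longleftrightarrow> E j i" using sgD(3)[OF sg, of i j] sgD(3)[OF sg, of j i] by blast
        thus ?thesis using False i j by (simp add: Q_idx)
      qed
    qed
    also have "\<dots> = (real (degree n E i))^2 + real (degree n E i)"
      using i by (simp add: sum.distrib degree_sum[of n E i])
    finally show "(\<Sum>j<n. ?Q$$(i,j) * ?Q$$(j,i)) = (real (degree n E i))^2 + real (degree n E i)" .
  qed
  also have "\<dots> = real (first_zagreb n E) + 2 * real (num_edges n E)"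
    unfolding first_zagreb_def sum.distrib deg_sum_real by simp
  finally show ?thesis .
qed

end


lemma spectral_setup:
  fixes X :: "real mat"
  assumes X: "X \<in> carrier_mat n n" and sym: "\<And>i j. i<n \<Longrightarrow> j<n \<Longrightarrow> X$$(i,j) = X$$(j,i)"
  shows "\<exists>es P P'. length es = n \<and> char_poly X = (\<Prod>e\<leftarrow>es. [:-e,1:]) \<and>
     P \<in> carrier_mat n n \<and> P' \<in> carrier_mat n n \<and> P * P' = 1\<^sub>m n \<and> P' * P = 1\<^sub>m n \<and>
     good n P P' es X (\<lambda>x. x)"
proof -
  obtain es where es: "length es = n" "char_poly X = (\<Prod>e\<leftarrow>es. [:-e,1:])"
    using sym_real_roots[OF X sym] by blast
  obtain B P P' where sd: "schur_decomposition X es = (B,P,P')" by (cases "schur_decomposition X es") auto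
  from schur_decomposition[OF X es(2) sd] have sim: "similar_mat_wit X B P P'" and
    ut: "upper_triangular B" and diag: "diag_mat B = es" by auto
  note w = similar_mat_witD2[OF X sim]
  have "good n P P' es X (\<lambda>x. x)" unfolding good_def
  proof (rule bexI[of _ B], intro conjI allI impI)
    fix i assume i: "i < n"
    have "diag_mat B ! i = B $$ (i,i)" using i w(5) unfolding diag_mat_def by auto
    thus "B $$ (i,i) = es ! i" using diag by simp
  qed (use w ut in auto)
  thus ?thesis using es w by blast
qed

lemma list_ineq:
  fixes es :: "real list" and d \<gamma> :: real
  assumes g: "\<And>e. e \<in> set es \<Longrightarrow> \<bar>e - d\<bar> \<le> \<gamma>"
  shows "(\<Sum>e\<leftarrow>es. (e-d)^2) \<le> (\<Sum>e\<leftarrow>es. \<bar>e-d\<bar>) * \<gamma>"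
    "(\<Sum>e\<leftarrow>es. (e-d)^2) = (\<Sum>e\<leftarrow>es. \<bar>e-d\<bar>) * \<gamma> \<longleftrightarrow> (\<forall>e\<in>set es. \<bar>e-d\<bar> = 0 \<or> \<bar>e-d\<bar> = \<gamma>)"
proof -
  have eq: "(\<Sum>e\<leftarrow>es. \<bar>e-d\<bar>) * \<gamma> - (\<Sum>e\<leftarrow>es. (e-d)^2) = (\<Sum>e\<leftarrow>es. \<bar>e-d\<bar> * (\<gamma> - \<bar>e-d\<bar>))"
    by (induct es) (auto simp: algebra_simps power2_eq_square)
  have nn: "\<And>x. x \<in> set (map (\<lambda>e. \<bar>e-d\<bar> * (\<gamma> - \<bar>e-d\<bar>)) es) \<Longrightarrow> 0 \<le> x" using g by auto
  have "0 \<le> (\<Sum>e\<leftarrow>es. \<bar>e-d\<bar> * (\<gamma> - \<bar>e-d\<bar>))" by (rule sum_list_nonneg) (use nn in auto)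
  then show "(\<Sum>e\<leftarrow>es. (e-d)^2) \<le> (\<Sum>e\<leftarrow>es. \<bar>e-d\<bar>) * \<gamma>"
    using eq by linarith
  have "(\<Sum>e\<leftarrow>es. (e-d)^2) = (\<Sum>e\<leftarrow>es. \<bar>e-d\<bar>) * \<gamma> \<longleftrightarrow> (\<Sum>e\<leftarrow>es. \<bar>e-d\<bar> * (\<gamma> - \<bar>e-d\<bar>)) = 0"
    using eq by linarith
  also have "\<dots> \<longleftrightarrow> (\<forall>e\<in>set es. \<bar>e-d\<bar> * (\<gamma> - \<bar>e-d\<bar>) = 0)"
    using sum_list_nonneg_eq_0_iff[of "map (\<lambda>e. \<bar>e-d\<bar> * (\<gamma> - \<bar>e-d\<bar>)) es"] nn by auto
  also have "\<dots> \<longleftrightarrow> (\<forall>e\<in>set es. \<bar>e-d\<bar> = 0 \<or> \<bar>e-d\<bar> = \<gamma>)" by auto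
  finally show "(\<Sum>e\<leftarrow>es. (e-d)^2) = (\<Sum>e\<leftarrow>es. \<bar>e-d\<bar>) * \<gamma> \<longleftrightarrow> (\<forall>e\<in>set es. \<bar>e-d\<bar> = 0 \<or> \<bar>e-d\<bar> = \<gamma>)" .
qed

lemma proots_linear_prod: "proots (\<Prod>e\<leftarrow>es. [:-e,1:]) = mset (es :: real list)"
proof (induct es)
  case (Cons a es)
  have "proots (\<Prod>e\<leftarrow>a#es. [:-e,1:]) = proots ([:-a,1:] * (\<Prod>e\<leftarrow>es. [:-e,1:]))" by simp
  also have "\<dots> = proots [:-a,1:] + proots (\<Prod>e\<leftarrow>es. [:-e,1:])"
    by (rule proots_mult, simp, auto simp: prod_list_zero_iff)
  finally show ?case using Cons proots_linear_factor[of "-a"] by simp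
qed simp


lemma sum_list_nth: "(\<Sum>e\<leftarrow>es. f e) = (\<Sum>i<length es. f (es!i))"
  by (simp add: sum_list_sum_nth atLeast0LessThan)

lemma cauchy_sum: fixes x :: "nat \<Rightarrow> real"
  shows "(\<Sum>i<n. x i)^2 \<le> real n * (\<Sum>i<n. (x i)^2)"
proof -
  have "0 \<le> (\<Sum>i<n. \<Sum>j<n. (x i - x j)^2)" by (intro sum_nonneg) auto
  also have "\<dots> = (\<Sum>i<n. \<Sum>j<n. (x i)^2) + (\<Sum>i<n. \<Sum>j<n. (x j)^2) - 2 * (\<Sum>i<n. \<Sum>j<n. x i * x j)"
    by (simp add: power2_diff sum.distrib sum_subtractf sum_distrib_left mult.assoc)
  also have "(\<Sum>i<n. \<Sum>j<n. x i * x j) = (\<Sum>i<n. x i)^2"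
    by (simp add: power2_eq_square sum_product)
  also have "(\<Sum>i<n. \<Sum>j<n. (x i)^2) = real n * (\<Sum>i<n. (x i)^2)"
    by (simp add: sum_distrib_left)
  also have "(\<Sum>i<n. \<Sum>j<n. (x j)^2) = real n * (\<Sum>i<n. (x i)^2)"
    by simp
  finally show ?thesis by simp
qed

lemma sum_sq_shift: "(\<Sum>e\<leftarrow>xs. (e - c)^2) = (\<Sum>e\<leftarrow>xs. e^2) - 2*c*(\<Sum>e\<leftarrow>xs. e) + real (length xs) * (c::real)^2"
  by (induct xs) (auto simp: power2_diff algebra_simps)

locale G =
  fixes n :: nat and E :: "nat \<Rightarrow> nat \<Rightarrow> bool" and es :: "real list" and P P' :: "real mat"
  assumes sg: "simple_graph n E" and conn: "connected_graph n E" and n2: "n \<ge> 2"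
    and les: "length es = n" and cp: "char_poly (signless_laplacian n E) = (\<Prod>e\<leftarrow>es. [:-e,1:])"
    and P: "P \<in> carrier_mat n n" and P': "P' \<in> carrier_mat n n"
    and PP': "P * P' = 1\<^sub>m n" and P'P: "P' * P = 1\<^sub>m n"
    and gQ: "good n P P' es (signless_laplacian n E) (\<lambda>x. x)"
begin

abbreviation "Q \<equiv> signless_laplacian n E"
abbreviation "m \<equiv> real (num_edges n E)"
abbreviation "d \<equiv> avg_deg n E"
abbreviation "\<gamma> \<equiv> gamma_max n E"
abbreviation "S \<equiv> (\<Sum>e\<leftarrow>es. (e - d)^2)"

lemma eig: "Q_eigenvalues n E = mset es"
  unfolding Q_eigenvalues_def cp by (rule proots_linear_prod)

lemma QE_eq: "QE n E = (\<Sum>e\<leftarrow>es. \<bar>e - d\<bar>)"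
  unfolding QE_def eig by (metis mset_map sum_mset_sum_list)

lemma gamma_eq: "\<gamma> = Max ((\<lambda>e. \<bar>e - d\<bar>) ` set es)"
  unfolding gamma_max_def eig by simp

lemma es_ne: "es \<noteq> []" using les n2 by auto

lemma gamma_ge: "e \<in> set es \<Longrightarrow> \<bar>e - d\<bar> \<le> \<gamma>"
  unfolding gamma_eq by (rule Max_ge, auto)

lemma gamma_attained: "\<exists>e\<in>set es. \<bar>e - d\<bar> = \<gamma>"
proof -
  have "\<gamma> \<in> (\<lambda>e. \<bar>e - d\<bar>) ` set es" unfolding gamma_eq by (rule Max_in, use es_ne in auto)
  thus ?thesis by auto
qed

lemma sum_es: "(\<Sum>e\<leftarrow>es. e) = 2 * m"
proof -
  have "mtr Q = (\<Sum>i<n. es!i)" using good_mtr[OF P P' PP' P'P les gQ] by simp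
  thus ?thesis using mtr_Q[OF sg] sum_list_nth[of "\<lambda>x. x" es] les by simp
qed

lemma sum_es2: "(\<Sum>e\<leftarrow>es. e^2) = real (first_zagreb n E) + 2 * m"
proof -
  have "good n P P' es (Q * Q) (\<lambda>x. x * x)" by (rule good_mult[OF P P' PP' P'P les gQ gQ])
  hence "mtr (Q * Q) = (\<Sum>i<n. es!i * es!i)" using good_mtr[OF P P' PP' P'P les] by blast
  thus ?thesis using mtr_QQ[OF sg] sum_list_nth[of "\<lambda>x. x^2" es] les by (simp add: power2_eq_square)
qed

lemma d_def': "d = 2 * m / real n" unfolding avg_deg_def by simp

lemma nd: "real n * d = 2 * m" unfolding d_def' using n2 by simp

lemma S_eq: "S = real (first_zagreb n E) + 2 * m - 4 * m^2 / real n"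
proof -
  have "S = (\<Sum>e\<leftarrow>es. e^2) - 2 * d * (\<Sum>e\<leftarrow>es. e) + real n * d^2"
    using les sum_sq_shift[of d es] by simp
  also have "\<dots> = real (first_zagreb n E) + 2 * m - 4 * m^2 / real n"
    unfolding sum_es sum_es2 d_def' using n2 by (simp add: field_simps power2_eq_square)
  finally show ?thesis .
qed

lemma has_edge: "\<exists>y. E 0 y"
proof -
  have "E\<^sup>*\<^sup>* 0 1" using conn n2 unfolding connected_graph_def by auto
  thus ?thesis by (cases rule: converse_rtranclpE) auto
qed

lemma m_pos: "m > 0"
proof -
  obtain y where y: "E 0 y" using has_edge by auto
  have "y \<in> {j. j < n \<and> E 0 j}" using sgD[OF sg y] y by auto
  hence "degree n E 0 \<noteq> 0" unfolding degree_def by (subst card_0_eq) auto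
  hence "1 \<le> real (degree n E 0)" by simp
  also have "\<dots> \<le> (\<Sum>i<n. real (degree n E i))"
    by (rule member_le_sum[of 0 "{..<n}" "\<lambda>i. real (degree n E i)"], use n2 in auto)
  finally show ?thesis using deg_sum_real[OF sg] by simp
qed

lemma S_pos: "S > 0"
proof -
  have "(\<Sum>i<n. real (degree n E i))^2 \<le> real n * (\<Sum>i<n. (real (degree n E i))^2)"
    by (rule cauchy_sum)
  hence "4 * m^2 \<le> real n * real (first_zagreb n E)"
    unfolding deg_sum_real[OF sg] first_zagreb_def by (simp add: power_mult_distrib)
  hence "4 * m^2 / real n \<le> real (first_zagreb n E)" using n2 by (simp add: field_simps)
  thus ?thesis unfolding S_eq using m_pos by linarith
qed

lemma gamma_pos: "\<gamma> > 0"
proof (rule ccontr)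
  assume "\<not> \<gamma> > 0"
  hence "\<forall>e\<in>set es. (e - d)^2 = 0" using gamma_ge by (metis abs_ge_zero abs_le_zero_iff order.trans not_less power_zero_numeral right_minus_eq) 
  hence "S = 0" by (induct es) auto
  thus False using S_pos by simp
qed

lemma ineq: "QE n E \<ge> S / \<gamma>"
  using list_ineq(1)[of es d \<gamma>, OF gamma_ge] gamma_pos unfolding QE_eq
  by (simp add: divide_le_eq)

lemma eqchar: "QE n E = S / \<gamma> \<longleftrightarrow> (\<forall>e\<in>set es. \<bar>e-d\<bar> = 0 \<or> \<bar>e-d\<bar> = \<gamma>)"
proof -
  have "QE n E = S / \<gamma> \<longleftrightarrow> S = QE n E * \<gamma>" using gamma_pos by (auto simp: field_simps)
  thus ?thesis using list_ineq(2)[of es d \<gamma>, OF gamma_ge] unfolding QE_eq by simp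
qed

end


context G begin

lemma eigvec: assumes e: "e \<in> set es"
  shows "\<exists>v::real vec. v \<in> carrier_vec n \<and> (\<exists>i<n. v$i \<noteq> 0) \<and>
     (\<forall>i<n. real (degree n E i) * v$i + (\<Sum>j<n. if E i j then v$j else 0) = e * v$i)"
proof -
  have "poly (char_poly Q) e = 0" unfolding cp using e by (rule linear_poly_root)
  then have "eigenvalue Q e" using eigenvalue_root_char_poly[OF Q_carrier] by simp
  then obtain v where v: "v \<in> carrier_vec n" "v \<noteq> 0\<^sub>v n" "Q *\<^sub>v v = e \<cdot>\<^sub>v v"
    unfolding eigenvalue_def eigenvector_def using Q_carrier[of n E] by auto
  have "\<exists>i<n. v$i \<noteq> 0" using v(1,2) by (metis eq_vecI carrier_vecD index_zero_vec)
  moreover have "real (degree n E i) * v$i + (\<Sum>j<n. if E i j then v$j else 0) = e * v$i" if i: "i < n" for i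
  proof -
    have "(Q *\<^sub>v v) $ i = e * v$i" using v(3) i v(1) by simp
    moreover have "(Q *\<^sub>v v) $ i = (\<Sum>j<n. Q$$(i,j) * v$j)"
      using i Q_carrier[of n E] v(1) by (auto simp: scalar_prod_def lessThan_atLeast0 intro!: sum.cong)
    moreover have "(\<Sum>j<n. Q$$(i,j) * v$j) = (\<Sum>j<n. (if i = j then real (degree n E i) * v$j else 0) + (if E i j then v$j else 0))"
      using i by (intro sum.cong) (auto simp: Q_idx distrib_right)
    moreover have "\<dots> = (\<Sum>j<n. if i = j then real (degree n E i) * v$j else 0) + (\<Sum>j<n. if E i j then v$j else 0)"
      by (rule sum.distrib)
    moreover have "(\<Sum>j<n. if i = j then real (degree n E i) * v$j else 0) = real (degree n E i) * v$i"
      using i by (simp add: sum.delta')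
    ultimately show ?thesis by simp
  qed
  ultimately show ?thesis using v(1) by blast
qed

lemma backward: assumes "even n \<and> graph_iso {0..<n} E {0..<n div 2 + n div 2}
                 (complete_bipartite_edge (n div 2) (n div 2))"
  shows "\<forall>e\<in>set es. \<bar>e-d\<bar> = 0 \<or> \<bar>e-d\<bar> = \<gamma>"
proof -
  define h where "h = n div 2"
  from assms obtain f where bij: "bij_betw f {0..<n} {0..<h+h}" and
    iso: "\<And>u v. u < n \<Longrightarrow> v < n \<Longrightarrow> E u v \<longleftrightarrow> complete_bipartite_edge h h (f u) (f v)"
    unfolding graph_iso_def h_def by auto
  have nh: "n = h + h" using bij_betw_same_card[OF bij] by simp
  have fr: "u < n \<Longrightarrow> f u < h + h" for u using bij unfolding bij_betw_def by auto
  define side where "side u = (f u < h)" for u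
  have Eside: "u < n \<Longrightarrow> v < n \<Longrightarrow> E u v \<longleftrightarrow> side u \<noteq> side v" for u v
    using iso fr unfolding side_def complete_bipartite_edge_def by auto
  have card_side: "card {u. u < n \<and> side u = b} = h" for b
  proof -
    have inj: "inj_on f {u. u < n \<and> side u = b}" using bij unfolding bij_betw_def by (auto intro: inj_on_subset)
    have "f ` {u. u < n \<and> side u = b} = {y \<in> f ` {0..<n}. (y < h) = b}" unfolding side_def by auto
    also have "\<dots> = {y \<in> {0..<h+h}. (y < h) = b}" using bij unfolding bij_betw_def by simp
    finally have im: "f ` {u. u < n \<and> side u = b} = {y \<in> {0..<h+h}. (y < h) = b}" .
    have "card {y \<in> {0..<h+h}. (y < h) = b} = h"
    proof (cases b)
      case True
      hence "{y \<in> {0..<h+h}. (y < h) = b} = {0..<h}" by auto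
      thus ?thesis by simp
    next
      case False
      hence "{y \<in> {0..<h+h}. (y < h) = b} = {h..<h+h}" by auto
      thus ?thesis by simp
    qed
    thus ?thesis using card_image[OF inj] im by simp
  qed
  have deg: "degree n E u = h" if u: "u < n" for u
  proof -
    have "{j. j < n \<and> E u j} = {j. j < n \<and> side j = (\<not> side u)}" using Eside u by auto
    thus ?thesis unfolding degree_def using card_side by simp
  qed
  have "2 * m = real n * real h"
    using deg_sum_real[OF sg] deg by simp
  hence dh: "d = real h" using nd n2 by (metis mult_cancel_left not_numeral_le_zero of_nat_0_eq_iff zero_le)
  have allh: "\<bar>e - d\<bar> = 0 \<or> \<bar>e - d\<bar> = real h" if e: "e \<in> set es" for e
  proof -
    obtain v :: "real vec" where v: "v \<in> carrier_vec n" "\<exists>i<n. v$i \<noteq> 0"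
      "\<And>i. i<n \<Longrightarrow> real (degree n E i) * v$i + (\<Sum>j<n. if E i j then v$j else 0) = e * v$i"
      using eigvec[OF e] by blast
    define T where "T b = (\<Sum>j<n. if side j = b then v$j else 0)" for b
    define \<mu> where "\<mu> = e - real h"
    have row: "\<mu> * v$i = T (\<not> side i)" if i: "i < n" for i
    proof -
      have "(\<Sum>j<n. if E i j then v$j else 0) = T (\<not> side i)"
        unfolding T_def using Eside[OF i] by (intro sum.cong) auto
      thus ?thesis using v(3)[OF i] deg[OF i] unfolding \<mu>_def by (simp add: algebra_simps)
    qed
    have tsum: "\<mu> * T b = real h * T (\<not> b)" for b
    proof -
      have "\<mu> * T b = (\<Sum>j<n. if side j = b then \<mu> * v$j else 0)"
        unfolding T_def sum_distrib_left by (intro sum.cong) auto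
      also have "\<dots> = (\<Sum>j<n. if side j = b then T (\<not> b) else 0)"
        using row by (intro sum.cong) auto
      also have "\<dots> = real (card {j. j < n \<and> side j = b}) * T (\<not> b)"
      proof -
        have "(\<Sum>j<n. if side j = b then T (\<not> b) else 0) = (\<Sum>j\<in>{j. j < n \<and> side j = b}. T (\<not> b))"
          by (rule sum.mono_neutral_cong_right) auto
        thus ?thesis by simp
      qed
      finally show ?thesis using card_side by simp
    qed
    show ?thesis
    proof (cases "\<mu> = 0")
      case True thus ?thesis unfolding dh \<mu>_def by simp
    next
      case False
      have "T True \<noteq> 0 \<or> T False \<noteq> 0"
      proof (rule ccontr)
        assume "\<not> (T True \<noteq> 0 \<or> T False \<noteq> 0)"
        hence "T b = 0" for b by (cases b) auto
        hence "v$i = 0" if "i < n" for i using row[OF that] False by simp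
        thus False using v(2) by blast
      qed
      then obtain b where b: "T b \<noteq> 0" by blast
      have "\<mu> * \<mu> * T b = \<mu> * (real h * T (\<not> b))" using tsum[of b] by simp
      also have "\<dots> = real h * (\<mu> * T (\<not> b))" by simp
      also have "\<dots> = real h * (real h * T b)" using tsum[of "\<not> b"] by simp
      finally have "\<mu> * \<mu> = real h * real h" using b by simp
      hence "\<mu>^2 = (real h)^2" by (simp add: power2_eq_square)
      hence "\<mu> = real h \<or> \<mu> = - real h" by (simp add: power2_eq_iff)
      hence "\<bar>\<mu>\<bar> = real h" by auto
      thus ?thesis unfolding dh \<mu>_def by simp
    qed
  qed
  obtain e0 where e0: "e0 \<in> set es" "\<bar>e0 - d\<bar> = \<gamma>" using gamma_attained by blast
  have "\<gamma> = real h" using allh[OF e0(1)] e0(2) gamma_pos by auto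
  thus ?thesis using allh by auto
qed

end


lemma mult_idx: "A \<in> carrier_mat n n \<Longrightarrow> B \<in> carrier_mat n n \<Longrightarrow> i < n \<Longrightarrow> j < n \<Longrightarrow>
  (A*B)$$(i,j) = (\<Sum>k<n. A$$(i,k) * B$$(k,j))"
  by (auto simp: scalar_prod_def lessThan_atLeast0 intro!: sum.cong)

lemma sum_sq_zero: fixes x :: "nat \<Rightarrow> nat \<Rightarrow> real"
  assumes "(\<Sum>i<n. \<Sum>j<n. (x i j)^2) = 0" "i < n" "j < n" shows "x i j = 0"
proof -
  have "\<forall>i\<in>{..<n}. (\<Sum>j<n. (x i j)^2) = 0"
    using assms(1) by (subst sum_nonneg_eq_0_iff[symmetric]) (auto intro: sum_nonneg)
  hence "(\<Sum>j<n. (x i j)^2) = 0" using assms(2) by auto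
  hence "\<forall>j\<in>{..<n}. (x i j)^2 = 0" by (subst sum_nonneg_eq_0_iff[symmetric]) auto
  thus ?thesis using assms(3) by auto
qed

context G begin

definition mm :: "nat \<Rightarrow> nat \<Rightarrow> real" where
  "mm i j = (if i = j then real (degree n E i) - d else 0) + (if E i j then 1 else 0)"

definition c3 :: "nat \<Rightarrow> nat \<Rightarrow> real" where
  "c3 i j = (\<Sum>l<n. (\<Sum>k<n. mm i k * mm k l) * mm l j)"

lemma mm_sym: "mm i j = mm j i" unfolding mm_def using sgD[OF sg] by auto

lemma c3_sym: "c3 i j = c3 j i"
proof -
  have "c3 i j = (\<Sum>l<n. \<Sum>k<n. mm i k * mm k l * mm l j)" unfolding c3_def by (simp add: sum_distrib_right)
  also have "\<dots> = (\<Sum>k<n. \<Sum>l<n. mm j l * mm l k * mm k i)"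
    by (subst sum.swap) (simp add: mm_sym mult.commute mult.left_commute)
  also have "\<dots> = c3 j i" unfolding c3_def by (simp add: sum_distrib_right)
  finally show ?thesis .
qed

lemma cubic: assumes H: "\<forall>e\<in>set es. \<bar>e-d\<bar> = 0 \<or> \<bar>e-d\<bar> = \<gamma>"
  shows "i < n \<Longrightarrow> j < n \<Longrightarrow> c3 i j = \<gamma>^2 * mm i j"
proof -
  note g = good_one[OF P P' PP' P'P les] good_add[OF P P' PP' P'P les] good_smult[OF P P' PP' P'P les]
     good_mult[OF P P' PP' P'P les] good_mtr[OF P P' PP' P'P les]
  define M where "M = Q + (-d) \<cdot>\<^sub>m 1\<^sub>m n"
  define R where "R = M * M * M + (-(\<gamma>^2)) \<cdot>\<^sub>m M"
  have gM: "good n P P' es M (\<lambda>x. x + (-d) * 1)" unfolding M_def by (intro g gQ)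
  have gR: "good n P P' es R (\<lambda>x. (x + (-d) * 1) * (x + (-d) * 1) * (x + (-d) * 1) + (-(\<gamma>^2)) * (x + (-d) * 1))"
    unfolding R_def by (intro g gM)
  have "mtr (R * R) = (\<Sum>i<n. ((es!i - d)^3 - \<gamma>^2 * (es!i - d))^2)"
    using g(5)[OF g(4)[OF gR gR]] by (simp add: power2_eq_square power3_eq_cube algebra_simps)
  also have "\<dots> = 0"
  proof (rule sum.neutral, rule ballI)
    fix i assume "i \<in> {..<n}"
    hence "es!i \<in> set es" using les by auto
    hence "\<bar>es!i-d\<bar> = 0 \<or> \<bar>es!i-d\<bar> = \<gamma>" using H by auto
    hence "es!i - d = 0 \<or> (es!i - d)^2 = \<gamma>^2" using power2_abs[of "es!i - d"] by (metis abs_eq_0)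
    hence "(es!i - d) * ((es!i - d)^2 - \<gamma>^2) = 0" by auto
    moreover have "(es!i - d)^3 - \<gamma>^2 * (es!i - d) = (es!i - d) * ((es!i - d)^2 - \<gamma>^2)"
      by (simp add: algebra_simps power3_eq_cube power2_eq_square)
    ultimately show "((es!i - d)^3 - \<gamma>^2 * (es!i - d))^2 = 0" by simp
  qed
  finally have tr0: "mtr (R * R) = 0" .
  have Mc: "M \<in> carrier_mat n n" unfolding M_def using Q_carrier[of n E] by auto
  have Mi: "M$$(i,j) = mm i j" if "i < n" "j < n" for i j
    unfolding M_def mm_def using that Q_carrier[of n E] by (auto simp: Q_idx)
  have MMi: "(M*M)$$(i,j) = (\<Sum>k<n. mm i k * mm k j)" if "i < n" "j < n" for i j
    using mult_idx[OF Mc Mc that] that by (auto simp: Mi intro!: sum.cong)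
  have Ri: "R$$(i,j) = c3 i j - \<gamma>^2 * mm i j" if "i < n" "j < n" for i j
  proof -
    have MMc: "M * M \<in> carrier_mat n n" using Mc by auto
    have "(M*M*M)$$(i,j) = (\<Sum>l<n. (M*M)$$(i,l) * M$$(l,j))" by (rule mult_idx[OF MMc Mc that])
    also have "\<dots> = c3 i j" unfolding c3_def using that by (intro sum.cong refl) (simp add: MMi Mi)
    finally have "(M*M*M)$$(i,j) = c3 i j" .
    thus ?thesis unfolding R_def using that Mc by (simp add: Mi)
  qed
  have Rc: "R \<in> carrier_mat n n" unfolding R_def using Mc by auto
  have "mtr (R * R) = (\<Sum>i<n. \<Sum>j<n. (c3 i j - \<gamma>^2 * mm i j)^2)"
  proof -
    have "mtr (R * R) = (\<Sum>i<n. (R*R)$$(i,i))" unfolding mtr_def using Rc by simp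
    also have "\<dots> = (\<Sum>i<n. \<Sum>j<n. R$$(i,j) * R$$(j,i))" using mult_idx[OF Rc Rc] by simp
    also have "\<dots> = (\<Sum>i<n. \<Sum>j<n. (c3 i j - \<gamma>^2 * mm i j)^2)"
    proof (intro sum.cong refl)
      fix i j assume "i \<in> {..<n}" "j \<in> {..<n}"
      hence "R$$(j,i) = R$$(i,j)" "R$$(i,j) = c3 i j - \<gamma>^2 * mm i j" using Ri c3_sym mm_sym by auto
      thus "R$$(i,j) * R$$(j,i) = (c3 i j - \<gamma>^2 * mm i j)^2" by (simp add: power2_eq_square)
    qed
    finally show ?thesis .
  qed
  with tr0 have "(\<Sum>i<n. \<Sum>j<n. (c3 i j - \<gamma>^2 * mm i j)^2) = 0" by simp
  from sum_sq_zero[OF this] show "i < n \<Longrightarrow> j < n \<Longrightarrow> c3 i j = \<gamma>^2 * mm i j" by simp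
qed

end


lemma sum_list_minus_const: "(\<Sum>e\<leftarrow>xs. e - c) = (\<Sum>e\<leftarrow>xs. e) - real (length xs) * (c::real)"
  by (induct xs) (auto simp: algebra_simps)

context G begin

lemma neg_eig: assumes H: "\<forall>e\<in>set es. \<bar>e-d\<bar> = 0 \<or> \<bar>e-d\<bar> = \<gamma>"
  shows "\<exists>e\<in>set es. e = d - \<gamma>"
proof (rule ccontr)
  assume "\<not> ?thesis"
  hence nn: "\<forall>x\<in>set (map (\<lambda>e. e - d) es). 0 \<le> x"
  proof (intro ballI)
    fix y assume ne: "\<not> (\<exists>e\<in>set es. e = d - \<gamma>)" and y: "y \<in> set (map (\<lambda>e. e - d) es)"
    then obtain e where e: "e \<in> set es" "y = e - d" by auto
    show "0 \<le> y"
    proof (rule ccontr)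
      assume "\<not> 0 \<le> y"
      hence "\<bar>e - d\<bar> = d - e" "d - e > 0" using e by auto
      moreover have "\<bar>e-d\<bar> = 0 \<or> \<bar>e-d\<bar> = \<gamma>" using H e by auto
      ultimately have "d - e = \<gamma>" by auto
      hence "e = d - \<gamma>" by simp
      thus False using ne e(1) by blast
    qed
  qed
  have "(\<Sum>e\<leftarrow>es. e - d) = 0" unfolding sum_list_minus_const sum_es les using nd by simp
  hence "\<forall>x\<in>set (map (\<lambda>e. e - d) es). x = 0" using sum_list_nonneg_eq_0_iff[of "map (\<lambda>e. e - d) es"] nn by auto
  moreover obtain e0 where "e0 \<in> set es" "\<bar>e0 - d\<bar> = \<gamma>" using gamma_attained by blast
  ultimately show False using gamma_pos by auto
qed

lemma psd: assumes e: "e \<in> set es" shows "e \<ge> 0"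
proof -
  obtain v :: "real vec" where v: "v \<in> carrier_vec n" "\<exists>i<n. v$i \<noteq> 0"
      "\<And>i. i<n \<Longrightarrow> real (degree n E i) * v$i + (\<Sum>j<n. if E i j then v$j else 0) = e * v$i"
      using eigvec[OF e] by blast
  define x where "x i = v$i" for i
  define a where "a i j = (if E i j then 1 else (0::real))" for i j
  have asym: "a i j = a j i" for i j unfolding a_def using sgD[OF sg] by auto
  have row: "real (degree n E i) * x i + (\<Sum>j<n. a i j * x j) = e * x i" if "i < n" for i
  proof -
    have "(\<Sum>j<n. a i j * x j) = (\<Sum>j<n. if E i j then v$j else 0)"
      unfolding a_def x_def by (intro sum.cong) auto
    thus ?thesis using v(3)[OF that] unfolding x_def by simp
  qed
  have "(\<Sum>i<n. x i * (real (degree n E i) * x i + (\<Sum>j<n. a i j * x j))) = (\<Sum>i<n. x i * (e * x i))"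
    by (intro sum.cong) (simp_all add: row)
  also have "\<dots> = e * (\<Sum>i<n. (x i)^2)"
    by (simp add: sum_distrib_left power2_eq_square mult.commute mult.left_commute)
  finally have "(\<Sum>i<n. x i * (real (degree n E i) * x i + (\<Sum>j<n. a i j * x j))) = e * (\<Sum>i<n. (x i)^2)" .
  moreover have "(\<Sum>i<n. x i * (real (degree n E i) * x i + (\<Sum>j<n. a i j * x j))) =
      (\<Sum>i<n. \<Sum>j<n. a i j * (x i + x j)^2) / 2"
  proof -
    have d1: "(\<Sum>i<n. real (degree n E i) * (x i)^2) = (\<Sum>i<n. \<Sum>j<n. a i j * (x i)^2)"
      unfolding degree_sum a_def by (simp add: sum_distrib_right)
    have d2: "(\<Sum>i<n. \<Sum>j<n. a i j * (x j)^2) = (\<Sum>i<n. \<Sum>j<n. a i j * (x i)^2)"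
      by (subst sum.swap) (simp add: asym)
    have "(\<Sum>i<n. \<Sum>j<n. a i j * (x i + x j)^2) =
        (\<Sum>i<n. \<Sum>j<n. a i j * (x i)^2) + (\<Sum>i<n. \<Sum>j<n. a i j * (x j)^2) + 2 * (\<Sum>i<n. \<Sum>j<n. a i j * x i * x j)"
      by (simp add: power2_sum sum.distrib sum_distrib_left algebra_simps)
    also have "\<dots> = 2 * (\<Sum>i<n. x i * (real (degree n E i) * x i + (\<Sum>j<n. a i j * x j)))"
    proof -
      have r: "(\<Sum>i<n. x i * (real (degree n E i) * x i + (\<Sum>j<n. a i j * x j))) =
        (\<Sum>i<n. real (degree n E i) * (x i)^2) + (\<Sum>i<n. \<Sum>j<n. a i j * x i * x j)"
        by (simp add: sum.distrib sum_distrib_left algebra_simps power2_eq_square)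
      show ?thesis unfolding r d1 d2 by simp
    qed
    finally show ?thesis by simp
  qed
  moreover have "0 \<le> (\<Sum>i<n. \<Sum>j<n. a i j * (x i + x j)^2)"
    unfolding a_def by (intro sum_nonneg) auto
  ultimately have ge: "0 \<le> e * (\<Sum>i<n. (x i)^2)" by linarith
  have pos: "0 < (\<Sum>i<n. (x i)^2)"
  proof -
    obtain i where i: "i < n" "x i \<noteq> 0" using v(2) x_def by auto
    have "(x i)^2 \<le> (\<Sum>i<n. (x i)^2)" by (rule member_le_sum[of i "{..<n}" "\<lambda>i. (x i)^2", simplified], insert i, auto)
    moreover have "(x i)^2 > 0" using i by simp
    ultimately show ?thesis by linarith
  qed
  show ?thesis using ge pos by (simp add: zero_le_mult_iff)
qed

lemma gamma_le_d: assumes H: "\<forall>e\<in>set es. \<bar>e-d\<bar> = 0 \<or> \<bar>e-d\<bar> = \<gamma>"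
  shows "\<gamma> \<le> d"
  using neg_eig[OF H] psd by force

end


lemma triple_swap: "(\<Sum>i<n. \<Sum>k<n. \<Sum>l<n. f i k l) = (\<Sum>l<n. \<Sum>k<(n::nat). \<Sum>i<n. (f i k l :: real))"
proof -
  have "(\<Sum>i<n. \<Sum>k<n. \<Sum>l<n. f i k l) = (\<Sum>i<n. \<Sum>l<n. \<Sum>k<n. f i k l)"
    by (rule sum.cong[OF refl], rule sum.swap)
  also have "\<dots> = (\<Sum>l<n. \<Sum>i<n. \<Sum>k<n. f i k l)" by (rule sum.swap)
  also have "\<dots> = (\<Sum>l<n. \<Sum>k<n. \<Sum>i<n. f i k l)"
    by (rule sum.cong[OF refl], rule sum.swap)
  finally show ?thesis .
qed

context G begin

lemma regular: assumes H: "\<forall>e\<in>set es. \<bar>e-d\<bar> = 0 \<or> \<bar>e-d\<bar> = \<gamma>"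
  shows "\<forall>i<n. real (degree n E i) = d" "\<gamma> = d"
proof -
  define u where "u i = (\<Sum>j<n. mm i j)" for i
  define w where "w i = (\<Sum>j<n. mm i j * u j)" for i
  have u_eq: "u i = 2 * real (degree n E i) - d" if i: "i < n" for i
  proof -
    have "u i = (\<Sum>j<n. (if i = j then real (degree n E i) - d else 0)) + (\<Sum>j<n. if E i j then 1 else 0)"
      unfolding u_def mm_def by (simp add: sum.distrib)
    also have "\<dots> = (real (degree n E i) - d) + real (degree n E i)"
      using i by (simp add: sum.delta degree_sum[symmetric])
    finally show ?thesis by simp
  qed
  have colsum: "(\<Sum>i<n. mm i j) = u j" for j unfolding u_def by (simp add: mm_sym)
  have sw: "(\<Sum>i<n. w i) = (\<Sum>j<n. (u j)^2)"
  proof -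
    have "(\<Sum>i<n. w i) = (\<Sum>j<n. \<Sum>i<n. mm i j * u j)" unfolding w_def by (rule sum.swap)
    also have "\<dots> = (\<Sum>j<n. (u j)^2)"
      by (simp add: sum_distrib_right[symmetric] colsum power2_eq_square)
    finally show ?thesis .
  qed
  have key: "(\<Sum>i<n. mm j i * w i) = \<gamma>^2 * u j" if j: "j < n" for j
  proof -
    have "(\<Sum>i<n. mm j i * w i) = (\<Sum>i<n. \<Sum>k<n. \<Sum>l<n. mm j i * mm i k * mm k l)"
      unfolding w_def u_def by (simp add: sum_distrib_left mult.assoc)
    also have "\<dots> = (\<Sum>l<n. \<Sum>k<n. \<Sum>i<n. mm j i * mm i k * mm k l)" by (rule triple_swap)
    also have "\<dots> = (\<Sum>l<n. c3 j l)" unfolding c3_def by (simp add: sum_distrib_right)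
    also have "\<dots> = (\<Sum>l<n. \<gamma>^2 * mm j l)" using cubic[OF H j] by simp
    also have "\<dots> = \<gamma>^2 * u j" unfolding u_def by (simp add: sum_distrib_left)
    finally show ?thesis .
  qed
  have ww: "(\<Sum>i<n. (w i)^2) = \<gamma>^2 * (\<Sum>j<n. (u j)^2)"
  proof -
    have "(\<Sum>i<n. (w i)^2) = (\<Sum>i<n. \<Sum>j<n. w i * mm i j * u j)"
      unfolding power2_eq_square by (subst (2) w_def) (simp add: sum_distrib_left mult.assoc)
    also have "\<dots> = (\<Sum>j<n. \<Sum>i<n. w i * mm i j * u j)" by (rule sum.swap)
    also have "\<dots> = (\<Sum>j<n. u j * (\<Sum>i<n. mm j i * w i))"
      by (simp add: sum_distrib_left mm_sym mult.commute mult.left_commute)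
    also have "\<dots> = (\<Sum>j<n. u j * (\<gamma>^2 * u j))" by (intro sum.cong refl) (simp add: key)
    also have "\<dots> = \<gamma>^2 * (\<Sum>j<n. (u j)^2)"
      by (simp add: sum_distrib_left power2_eq_square mult.commute mult.left_commute)
    finally show ?thesis .
  qed
  define U where "U = (\<Sum>j<n. (u j)^2)"
  have "0 \<le> (\<Sum>i<n. (\<gamma>^2 - w i)^2)" by (intro sum_nonneg) auto
  also have "\<dots> = real n * \<gamma>^2 * \<gamma>^2 - 2 * \<gamma>^2 * (\<Sum>i<n. w i) + (\<Sum>i<n. (w i)^2)"
    by (simp add: power2_diff sum.distrib sum_subtractf sum_distrib_left mult.assoc)
  also have "\<dots> = \<gamma>^2 * (real n * \<gamma>^2 - U)" unfolding sw ww U_def by (simp add: algebra_simps)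
  finally have "0 \<le> \<gamma>^2 * (real n * \<gamma>^2 - U)" .
  hence Ule: "U \<le> real n * \<gamma>^2" using gamma_pos by (simp add: zero_le_mult_iff)
  have su: "(\<Sum>i<n. u i) = real n * d"
  proof -
    have "(\<Sum>i<n. u i) = (\<Sum>i<n. 2 * real (degree n E i) - d)" by (intro sum.cong refl) (simp add: u_eq)
    also have "\<dots> = 2 * (2 * m) - real n * d" by (simp add: sum_subtractf sum_distrib_left[symmetric] deg_sum_real[OF sg])
    finally show ?thesis using nd by simp
  qed
  have "(\<Sum>i<n. (u i - d)^2) = U - 2 * d * (\<Sum>i<n. u i) + real n * d^2"
    unfolding U_def by (simp add: power2_diff sum.distrib sum_subtractf sum_distrib_left mult.assoc mult.commute mult.left_commute)
  also have "\<dots> = U - real n * d^2" unfolding su by (simp add: power2_eq_square)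
  finally have sq: "(\<Sum>i<n. (u i - d)^2) = U - real n * d^2" .
  have gd: "\<gamma> \<le> d" by (rule gamma_le_d[OF H])
  hence "\<gamma>^2 \<le> d^2" using gamma_pos by (intro power_mono) auto
  hence "real n * \<gamma>^2 \<le> real n * d^2" by (intro mult_left_mono) auto
  moreover have "0 \<le> (\<Sum>i<n. (u i - d)^2)" by (intro sum_nonneg) auto
  ultimately have z: "(\<Sum>i<n. (u i - d)^2) = 0" and eqn: "real n * \<gamma>^2 = real n * d^2"
    using sq Ule by linarith+
  from eqn n2 have "\<gamma>^2 = d^2" by simp
  thus "\<gamma> = d" using gamma_pos gd by (metis power2_eq_iff_nonneg less_imp_le order.trans)
  show "\<forall>i<n. real (degree n E i) = d"
  proof (intro allI impI)
    fix i assume i: "i < n"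
    have "\<forall>i\<in>{..<n}. (u i - d)^2 = 0" using z by (subst sum_nonneg_eq_0_iff[symmetric]) auto
    hence "u i = d" using i by auto
    thus "real (degree n E i) = d" using u_eq[OF i] by simp
  qed
qed

end


context G begin

lemma forward: assumes H: "\<forall>e\<in>set es. \<bar>e-d\<bar> = 0 \<or> \<bar>e-d\<bar> = \<gamma>"
  shows "even n \<and> graph_iso {0..<n} E {0..<n div 2 + n div 2}
                 (complete_bipartite_edge (n div 2) (n div 2))"
proof -
  note reg = regular[OF H]
  define r where "r = degree n E 0"
  have dr: "d = real r" using reg(1) n2 unfolding r_def by auto
  have degr: "degree n E i = r" if "i < n" for i using reg(1) that dr by auto
  have gr: "\<gamma> = real r" using reg(2) dr by simp
  define ind where "ind P = (if P then 1 else (0::real))" for P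
  have mm_eq: "mm i j = ind (E i j)" if "i < n" "j < n" for i j
    unfolding mm_def ind_def using that degr dr irr[OF sg] by auto
  have cub: "(\<Sum>l<n. (\<Sum>k<n. ind (E i k) * ind (E k l)) * ind (E l j)) = (real r)^2 * ind (E i j)"
    if "i < n" "j < n" for i j
  proof -
    have "(\<Sum>l<n. (\<Sum>k<n. ind (E i k) * ind (E k l)) * ind (E l j)) = c3 i j"
      unfolding c3_def using that by (intro sum.cong refl) (simp add: mm_eq)
    also have "\<dots> = \<gamma>^2 * mm i j" by (rule cubic[OF H that])
    finally show ?thesis using that by (simp add: gr mm_eq)
  qed
  have degsum: "(\<Sum>k<n. ind (E i k)) = real r" "(\<Sum>k<n. ind (E k i)) = real r" if "i < n" for i
  proof -
    show "(\<Sum>k<n. ind (E i k)) = real r" unfolding ind_def using degree_sum[of n E i] degr[OF that] by simp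
    have "(\<Sum>k<n. ind (E k i)) = (\<Sum>k<n. ind (E i k))" unfolding ind_def using sgD[OF sg]
      by (intro sum.cong refl) auto
    thus "(\<Sum>k<n. ind (E k i)) = real r" unfolding ind_def using degree_sum[of n E i] degr[OF that] by simp
  qed
  obtain b where Eab: "E 0 b" using has_edge by blast
  define a where "a = (0::nat)"
  have Eab': "E a b" "E b a" "a < n" "b < n" using Eab sgD[OF sg Eab] unfolding a_def by auto
  have K: "E k l" if "k < n" "l < n" "E b k" "E l a" for k l
  proof -
    define t where "t k l = ind (E b k) * ind (E l a) * (1 - ind (E k l))" for k l
    have "(\<Sum>l<n. \<Sum>k<n. t k l) = (\<Sum>l<n. \<Sum>k<n. ind (E b k) * ind (E l a))
          - (\<Sum>l<n. (\<Sum>k<n. ind (E b k) * ind (E k l)) * ind (E l a))"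
      unfolding t_def by (simp add: sum_subtractf sum_distrib_right sum_distrib_left algebra_simps)
    also have "(\<Sum>l<n. \<Sum>k<n. ind (E b k) * ind (E l a)) = real r * real r"
      by (simp add: sum_distrib_left[symmetric] sum_distrib_right[symmetric] degsum Eab' mult.commute)
    also have "(\<Sum>l<n. (\<Sum>k<n. ind (E b k) * ind (E k l)) * ind (E l a)) = (real r)^2"
      using cub[of b a] Eab' unfolding ind_def by simp
    finally have z: "(\<Sum>l<n. \<Sum>k<n. t k l) = 0" by (simp add: power2_eq_square)
    have tnn: "0 \<le> t k l" for k l unfolding t_def ind_def by auto
    have "\<forall>l\<in>{..<n}. (\<Sum>k<n. t k l) = 0" using z tnn
      by (subst sum_nonneg_eq_0_iff[symmetric]) (auto intro: sum_nonneg)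
    hence "\<forall>k\<in>{..<n}. t k l = 0" using \<open>l < n\<close> tnn by (subst sum_nonneg_eq_0_iff[symmetric]) auto
    hence "t k l = 0" using \<open>k < n\<close> by auto
    thus ?thesis using that unfolding t_def ind_def by (auto split: if_splits)
  qed
  define X where "X = {k. k < n \<and> E b k}"
  define Y where "Y = {l. l < n \<and> E a l}"
  have finX: "finite X" "finite Y" unfolding X_def Y_def by auto
  have cX: "card X = r" "card Y = r" unfolding X_def Y_def using degr Eab' unfolding degree_def by auto
  have NX: "{j. j < n \<and> E x j} = Y" if x: "x \<in> X" for x
  proof -
    have "Y \<subseteq> {j. j < n \<and> E x j}"
    proof
      fix l assume "l \<in> Y" hence l: "l < n" "E a l" unfolding Y_def by auto
      have "E l a" using sgD(3)[OF sg l(2)] .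
      moreover have "x < n" "E b x" using x unfolding X_def by auto
      ultimately have "E x l" using K l(1) by blast
      thus "l \<in> {j. j < n \<and> E x j}" using l by auto
    qed
    moreover have "card Y = card {j. j < n \<and> E x j}" using cX degr x unfolding X_def degree_def by auto
    ultimately show ?thesis by (intro card_subset_eq[symmetric]) auto
  qed
  have NY: "{j. j < n \<and> E y j} = X" if y: "y \<in> Y" for y
  proof -
    have "X \<subseteq> {j. j < n \<and> E y j}"
    proof
      fix k assume "k \<in> X" hence k: "k < n" "E b k" unfolding X_def by auto
      have yy: "y < n" "E a y" using y unfolding Y_def by auto
      have "E y a" using sgD(3)[OF sg yy(2)] .
      hence "E k y" using K k yy(1) by blast
      hence "E y k" using sgD(3)[OF sg] by blast
      thus "k \<in> {j. j < n \<and> E y j}" using k by auto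
    qed
    moreover have "card X = card {j. j < n \<and> E y j}" using cX degr y unfolding Y_def degree_def by auto
    ultimately show ?thesis by (intro card_subset_eq[symmetric]) auto
  qed
  have disj: "X \<inter> Y = {}"
  proof (rule ccontr)
    assume "X \<inter> Y \<noteq> {}"
    then obtain z where "z \<in> X" "z \<in> Y" by auto
    hence z: "z < n" "E b z" "E a z" unfolding X_def Y_def by auto
    have "E z a" using sgD(3)[OF sg z(3)] .
    hence "E z z" using K z by blast
    thus False using irr[OF sg] by auto
  qed
  have aX: "a \<in> X" unfolding X_def using Eab' by auto
  have reach: "E\<^sup>*\<^sup>* a v \<Longrightarrow> v \<in> X \<union> Y" for v
  proof (induct rule: rtranclp_induct)
    case base thus ?case using aX by auto
  next
    case (step u v)
    have "v < n" using sgD[OF sg step(2)] by auto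
    thus ?case using step NX NY by blast
  qed
  have all: "{0..<n} = X \<union> Y"
  proof
    show "{0..<n} \<subseteq> X \<union> Y"
    proof
      fix x assume "x \<in> {0..<n}"
      hence "E\<^sup>*\<^sup>* a x" using conn Eab'(3) unfolding connected_graph_def by auto
      thus "x \<in> X \<union> Y" by (rule reach)
    qed
    show "X \<union> Y \<subseteq> {0..<n}" unfolding X_def Y_def by auto
  qed
  have nr: "n = r + r" using card_Un_disjoint[OF finX disj] cX all by (metis card_atLeastLessThan diff_zero)
  have ev: "even n" and hr: "n div 2 = r" using nr by auto
  obtain g1 where g1: "bij_betw g1 X {0..<r}" using ex_bij_betw_finite_nat[OF finX(1)] cX by auto
  obtain g2 where g2: "bij_betw g2 Y {0..<r}" using ex_bij_betw_finite_nat[OF finX(2)] cX by auto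
  have g2': "bij_betw (\<lambda>y. r + g2 y) Y {r..<r+r}"
  proof -
    have "bij_betw (plus r) {0..<r} {r..<r+r}" unfolding bij_betw_def by (auto simp: add.commute)
    from bij_betw_trans[OF g2 this] show ?thesis by (simp add: comp_def)
  qed
  define f where "f x = (if x \<in> X then g1 x else r + g2 x)" for x
  have bij: "bij_betw f {0..<n} {0..<r+r}"
  proof -
    have "bij_betw f (X \<union> Y) ({0..<r} \<union> {r..<r+r})"
      unfolding f_def by (rule bij_betw_disjoint_Un[OF g1 g2' disj]) auto
    moreover have "{0..<r} \<union> {r..<r+r} = {0..<r+r}" by auto
    ultimately show ?thesis using all by simp
  qed
  have fX: "x \<in> X \<Longrightarrow> f x < r" "x \<in> Y \<Longrightarrow> f x \<ge> r \<and> f x < r + r" for x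
    using g1 g2 disj unfolding f_def bij_betw_def by auto
  have edge: "E u v \<longleftrightarrow> complete_bipartite_edge r r (f u) (f v)" if "u \<in> {0..<n}" "v \<in> {0..<n}" for u v
  proof -
    have uv: "u \<in> X \<union> Y" "v \<in> X \<union> Y" using that all by auto
    have "E u v \<longleftrightarrow> (u \<in> X \<longleftrightarrow> v \<in> Y)"
    proof (cases "u \<in> X")
      case True thus ?thesis using NX[OF True] that disj by auto
    next
      case False hence "u \<in> Y" using uv by auto
      thus ?thesis using NY[OF \<open>u \<in> Y\<close>] that uv False disj by force
    qed
    moreover have s: "f x < r + r" "(f x < r) \<longleftrightarrow> x \<in> X" if "x \<in> X \<union> Y" for x
    proof -
      show "f x < r + r" using that fX(1)[of x] fX(2)[of x] by (cases "x \<in> X") auto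
      show "(f x < r) \<longleftrightarrow> x \<in> X" using that fX(1)[of x] fX(2)[of x] by (cases "x \<in> X") auto
    qed
    moreover have "v \<in> Y \<longleftrightarrow> v \<notin> X" using uv disj by auto
    ultimately show ?thesis unfolding complete_bipartite_edge_def using s[OF uv(1)] s[OF uv(2)] by auto
  qed
  show ?thesis using ev bij edge unfolding hr graph_iso_def by blast
qed

end

theorem mainTheorem10:
  fixes n :: nat and E :: "nat \<Rightarrow> nat \<Rightarrow> bool"
  assumes "simple_graph n E" and "connected_graph n E" and "n \<ge> 2"
    and "gamma_min n E = 0"
  shows "QE n E \<ge> (2 * real (num_edges n E) + real (first_zagreb n E)
                    - 4 * (real (num_edges n E))^2 / real n) / gamma_max n E \<and>
         (QE n E = (2 * real (num_edges n E) + real (first_zagreb n E)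
                    - 4 * (real (num_edges n E))^2 / real n) / gamma_max n E
         \<longleftrightarrow> even n \<and> graph_iso {0..<n} E {0..<n div 2 + n div 2}
                 (complete_bipartite_edge (n div 2) (n div 2)))"
proof -
  obtain es P P' where sp: "length es = n" "char_poly (signless_laplacian n E) = (\<Prod>e\<leftarrow>es. [:-e,1:])"
     "P \<in> carrier_mat n n" "P' \<in> carrier_mat n n" "P * P' = 1\<^sub>m n" "P' * P = 1\<^sub>m n"
     "good n P P' es (signless_laplacian n E) (\<lambda>x. x)"
    using spectral_setup[OF Q_carrier Q_sym[OF assms(1)]] by blast
  interpret G n E es P P' using assms sp by unfold_locales auto
  have eq: "(2 * real (num_edges n E) + real (first_zagreb n E)
                    - 4 * (real (num_edges n E))^2 / real n) = S" using S_eq by simp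
  show ?thesis unfolding eq using ineq eqchar forward backward by blast
qed


end
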